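(* Consider the one-dimensional hierarchical heavy hitter algorithm described in the context, with threshold $\phi$ and accuracy parameter $\epsilon$ such that $1/\epsilon$ is a positive integer and $\epsilon<\phi/2$, run on a nonempty stream ($N>0$). Let $P$ be the set of prefixes it outputs, and for each prefix $p$ let $F'_p=f_{\max}(p)-s_p$ (with $s_p$ the final value computed by the output procedure) be the estimated conditioned count and $F_p$ the conditioned count of $p$ with respect to $P$. Then $|P|\le\frac{1}{\phi-2\epsilon}$, and for every $p\in P$, $F'_p-F_p\le\frac{1}{\phi-2\epsilon}\,\epsilon N$.
   Context: Hierarchy: a rooted tree in which every leaf has depth $h$; nodes are prefixes, leaves are fully specified elements; $e\preceq p$ means $p$ is an ancestor of or equal to $e$, $e\prec p$ means additionally $e\neq p$; non-root prefixes have a parent $\mathrm{par}(p)$. Stream: updates $(e,c)$, $e$ fully specified, $c$ a positive integer; $f(e)$ is the total increment of $e$, $N=\sum_e f(e)$, and $f(p)=\sum_{e\preceq p}f(e)$ for a prefix $p$. For a set $P$ of prefixes and a prefix $p$, with $P_p=\{q\in P:q\prec p\}$, the conditioned count is $F_p=\sum f(e)$ over fully specified $e\preceq p$ with $e\not\preceq q$ for all $q\in P_p$. Space Saving with $m$ counters: maintains at most $m$ items with counters and error values; on $(i,c)$, a tracked $i$ has its counter increased by $c$; otherwise if fewer than $m$ items are tracked $i$ is added with counter $c$, error $0$; otherwise an item $j$ with the smallest counter is replaced by $i$ with counter $c(j)+c$ and error $c(j)$. Estimates: tracked $i$: $f_{\max}(i)=c(i)$, $f_{\min}(i)=c(i)-\mathrm{err}(i)$;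 untracked $i$: $f_{\min}(i)=0$, $f_{\max}(i)=$ smallest counter (or $0$ if fewer than $m$ items tracked). Algorithm: one Space Saving instance with $1/\epsilon$ counters per depth; on $(e,c)$ feed $(p,c)$ to the instance of $p$'s depth for every prefix $p$ with $e\preceq p$; $f_{\min}(p),f_{\max}(p)$ are that instance's estimates. Output procedure: set $s_e=0$ for all prefixes; process prefixes in postorder; for prefix $e$, if $f_{\max}(e)-s_e\ge\phi N$ put $e$ in $P$ and add $f_{\min}(e)$ to $s_{\mathrm{par}(e)}$, else add $s_e$ to $s_{\mathrm{par}(e)}$ (no parent update at the root). *)

theory Defs
  imports Complex_Main "HOL-Library.Sublist"
begin

text \<open>Prefixes are represented as lists (paths from the root); the root is the empty
list, the parent of a non-root prefix q is butlast q, the depth of a prefix is its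
length.  For prefixes e and p, "e is below-or-equal p" (p is an ancestor of or equal
to e) is  prefix p e ; strictly below is  strict_prefix p e .\<close>

definition children :: "'b list set \<Rightarrow> 'b list \<Rightarrow> 'b list set" where
  "children T p = {q \<in> T. q \<noteq> [] \<and> butlast q = p}"

definition hierarchy :: "'b list set \<Rightarrow> nat \<Rightarrow> bool" where
  "hierarchy T h \<longleftrightarrow> finite T \<and> [] \<in> T
     \<and> (\<forall>q\<in>T. q \<noteq> [] \<longrightarrow> butlast q \<in> T)
     \<and> (\<forall>p\<in>T. length p \<le> h \<and> (length p < h \<longrightarrow> children T p \<noteq> {}))"

definition freq :: "('b list \<times> nat) list \<Rightarrow> 'b list \<Rightarrow> nat" where
  "freq S e = sum_list (map snd (filter (\<lambda>u. fst u = e) S))"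

definition total :: "('b list \<times> nat) list \<Rightarrow> nat" where
  "total S = sum_list (map snd S)"

definition valid_stream :: "'b list set \<Rightarrow> nat \<Rightarrow> ('b list \<times> nat) list \<Rightarrow> bool" where
  "valid_stream T h S \<longleftrightarrow> (\<forall>(e, c)\<in>set S. e \<in> T \<and> length e = h \<and> c > 0)"

definition cond_count ::
  "'b list set \<Rightarrow> nat \<Rightarrow> ('b list \<times> nat) list \<Rightarrow> 'b list set \<Rightarrow> 'b list \<Rightarrow> nat" where
  "cond_count T h S P p =
     (\<Sum>e\<in>{e\<in>T. length e = h \<and> prefix p e
              \<and> (\<forall>q\<in>P. strict_prefix p q \<longrightarrow> \<not> prefix q e)}. freq S e)"

text \<open>A state maps each tracked item to (counter, error).  Tie-breaking among items
with the smallest counter is left nondeterministic.\<close>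

type_synonym 'k ss_state = "'k \<Rightarrow> (nat \<times> nat) option"

inductive ss_step :: "nat \<Rightarrow> 'k ss_state \<Rightarrow> 'k \<times> nat \<Rightarrow> 'k ss_state \<Rightarrow> bool" where
  tracked: "St i = Some (ci, ei) \<Longrightarrow> ss_step m St (i, c) (St(i \<mapsto> (ci + c, ei)))"
| add: "St i = None \<Longrightarrow> card (dom St) < m \<Longrightarrow> ss_step m St (i, c) (St(i \<mapsto> (c, 0)))"
| replace: "St i = None \<Longrightarrow> \<not> card (dom St) < m \<Longrightarrow> St j = Some (cj, ej)
     \<Longrightarrow> (\<forall>k ck ek. St k = Some (ck, ek) \<longrightarrow> cj \<le> ck)
     \<Longrightarrow> ss_step m St (i, c) ((St(j := None))(i \<mapsto> (cj + c, cj)))"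

inductive ss_run :: "nat \<Rightarrow> ('k \<times> nat) list \<Rightarrow> 'k ss_state \<Rightarrow> bool" where
  Nil: "ss_run m [] Map.empty"
| snoc: "ss_run m xs St \<Longrightarrow> ss_step m St x St' \<Longrightarrow> ss_run m (xs @ [x]) St'"

definition ss_fmax :: "nat \<Rightarrow> 'k ss_state \<Rightarrow> 'k \<Rightarrow> nat" where
  "ss_fmax m St i = (case St i of
      Some (ci, ei) \<Rightarrow> ci
    | None \<Rightarrow> (if card (dom St) < m then 0 else Min {ck. \<exists>k ek. St k = Some (ck, ek)}))"

definition ss_fmin :: "'k ss_state \<Rightarrow> 'k \<Rightarrow> nat" where
  "ss_fmin St i = (case St i of Some (ci, ei) \<Rightarrow> ci - ei | None \<Rightarrow> 0)"

text \<open>Final value of s_p after the postorder pass: s_p is the sum over the children q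
of p of (f_min q if q is output, else s_q); q is output iff f_max q - s_q \<ge> thr.
The first nat argument is the remaining height h - length p (fuel).\<close>

fun hhh_s :: "'b list set \<Rightarrow> ('b list \<Rightarrow> real) \<Rightarrow> ('b list \<Rightarrow> real) \<Rightarrow> real
              \<Rightarrow> nat \<Rightarrow> 'b list \<Rightarrow> real" where
  "hhh_s T fmax fmin thr 0 p = 0"
| "hhh_s T fmax fmin thr (Suc k) p =
     (\<Sum>q\<in>children T p. if fmax q - hhh_s T fmax fmin thr k q \<ge> thr
                        then fmin q else hhh_s T fmax fmin thr k q)"

end

theory Submission
  imports Defs
begin

lemma freq_snoc: "freq (xs @ [(i,c)]) k = freq xs k + (if i = k then c else 0)"
  by (simp add: freq_def)
lemma total_snoc: "total (xs @ [(i,c)]) = total xs + c"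
  by (simp add: total_def)
lemma freq_Nil[simp]: "freq [] k = 0" by (simp add: freq_def)
lemma total_Nil[simp]: "total [] = 0" by (simp add: total_def)

definition cnt :: "'k ss_state \<Rightarrow> 'k \<Rightarrow> nat" where "cnt St k = fst (the (St k))"

definition ssinv :: "nat \<Rightarrow> ('b list \<times> nat) list \<Rightarrow> 'b list ss_state \<Rightarrow> bool" where
 "ssinv m xs St \<longleftrightarrow> finite (dom St) \<and> card (dom St) \<le> m
   \<and> (\<forall>i ci ei. St i = Some (ci,ei) \<longrightarrow> ei \<le> ci \<and> ci - ei \<le> freq xs i \<and> freq xs i \<le> ci \<and> ei * m \<le> total xs)
   \<and> sum (cnt St) (dom St) = total xs
   \<and> (\<forall>i. St i = None \<longrightarrow> (card (dom St) < m \<longrightarrow> freq xs i = 0)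
          \<and> (\<forall>k ck ek. St k = Some (ck,ek) \<longrightarrow> freq xs i \<le> ck))"

lemma inv_tracked:
  assumes I: "ssinv m xs St" and Si: "St i = Some (ci, ei)"
  shows "ssinv m (xs @ [(i,c)]) (St(i \<mapsto> (ci + c, ei)))"
proof -
  let ?St' = "St(i \<mapsto> (ci + c, ei))"
  have dom': "dom ?St' = dom St" using Si by auto
  have idom: "i \<in> dom St" using Si by auto
  have fin: "finite (dom St)" using I by (simp add: ssinv_def)
  have e1: "sum (cnt ?St') (dom St) = cnt ?St' i + sum (cnt ?St') (dom St - {i})"
    using fin idom by (simp add: sum.remove)
  have e2: "sum (cnt ?St') (dom St - {i}) = sum (cnt St) (dom St - {i})"
    by (rule sum.cong) (auto simp: cnt_def)
  have e3: "cnt ?St' i = cnt St i + c" using Si by (simp add: cnt_def)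
  have e4: "sum (cnt St) (dom St) = cnt St i + sum (cnt St) (dom St - {i})"
    using fin idom by (simp add: sum.remove)
  have sm: "sum (cnt ?St') (dom ?St') = total (xs @ [(i,c)])"
    using I dom' e1 e2 e3 e4 by (simp add: ssinv_def total_snoc)
  show ?thesis
    unfolding ssinv_def dom'
    using I Si sm dom' by (auto simp: ssinv_def freq_snoc total_snoc split: if_splits; fastforce)
qed

lemma inv_add:
  assumes I: "ssinv m xs St" and Si: "St i = None" and lt: "card (dom St) < m"
  shows "ssinv m (xs @ [(i,c)]) (St(i \<mapsto> (c, 0)))"
proof -
  let ?St' = "St(i \<mapsto> (c, 0))"
  have dom': "dom ?St' = insert i (dom St)" by auto
  have idom: "i \<notin> dom St" using Si by auto
  have fin: "finite (dom St)" using I by (simp add: ssinv_def)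
  have cd: "card (dom ?St') = Suc (card (dom St))" using dom' idom fin by simp
  have e1: "sum (cnt ?St') (dom ?St') = cnt ?St' i + sum (cnt ?St') (dom St)"
    using fin idom dom' by simp
  have e2: "sum (cnt ?St') (dom St) = sum (cnt St) (dom St)"
    using idom by (intro sum.cong) (auto simp: cnt_def)
  have e3: "cnt ?St' i = c" by (simp add: cnt_def)
  have sm: "sum (cnt ?St') (dom ?St') = total (xs @ [(i,c)])"
    using I e1 e2 e3 by (simp add: ssinv_def total_snoc)
  have em: "\<And>k ck ek. St k = Some(ck,ek) \<Longrightarrow> ek*m \<le> total xs + c"
    using I by (simp add: ssinv_def) (meson trans_le_add1)
  have f0: "freq xs i = 0" using I Si lt by (simp add: ssinv_def)
  have f0': "\<And>k. St k = None \<Longrightarrow> freq xs k = 0" using I lt by (simp add: ssinv_def)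
  show ?thesis
    unfolding ssinv_def
    using I Si sm cd lt f0 f0' fin dom' em by (auto simp: ssinv_def freq_snoc total_snoc split: if_splits)
qed

lemma inv_replace:
  assumes I: "ssinv m xs St" and Si: "St i = None" and nlt: "\<not> card (dom St) < m"
    and Sj: "St j = Some (cj, ej)" and mn: "\<forall>k ck ek. St k = Some (ck, ek) \<longrightarrow> cj \<le> ck"
  shows "ssinv m (xs @ [(i,c)]) ((St(j := None))(i \<mapsto> (cj + c, cj)))"
proof -
  let ?St' = "(St(j := None))(i \<mapsto> (cj + c, cj))"
  have ij: "i \<noteq> j" using Si Sj by auto
  have dom': "dom ?St' = insert i (dom St - {j})" by auto
  have idom: "i \<notin> dom St" using Si by auto
  have jdom: "j \<in> dom St" using Sj by auto
  have fin: "finite (dom St)" using I by (simp add: ssinv_def)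
  have cm: "card (dom St) = m" using I nlt by (simp add: ssinv_def)
  have cd: "card (dom ?St') = card (dom St)"
  proof -
    have "card (dom St) > 0" using jdom fin by (auto simp: card_gt_0_iff)
    then show ?thesis using dom' idom fin jdom card_Suc_Diff1[OF fin jdom] by simp
  qed
  have e1: "sum (cnt ?St') (dom ?St') = cnt ?St' i + sum (cnt ?St') (dom St - {j})"
    using fin idom dom' by simp
  have e2: "sum (cnt ?St') (dom St - {j}) = sum (cnt St) (dom St - {j})"
    using idom by (intro sum.cong) (auto simp: cnt_def)
  have e3: "cnt ?St' i = cj + c" by (simp add: cnt_def)
  have e4: "sum (cnt St) (dom St) = cnt St j + sum (cnt St) (dom St - {j})"
    using fin jdom by (simp add: sum.remove)
  have e5: "cnt St j = cj" using Sj by (simp add: cnt_def)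
  have tot: "sum (cnt St) (dom St) = total xs" using I by (simp add: ssinv_def)
  have sm: "sum (cnt ?St') (dom ?St') = total (xs @ [(i,c)])"
    using tot e1 e2 e3 e4 e5 by (simp add: total_snoc)
  have "cj * m = (\<Sum>k\<in>dom St. cj)" using cm by simp
  also have "\<dots> \<le> sum (cnt St) (dom St)"
    by (rule sum_mono) (use mn in \<open>force simp: cnt_def\<close>)
  finally have cjm: "cj * m \<le> total xs" using tot by simp
  have fi: "freq xs i \<le> cj" using I Si Sj unfolding ssinv_def by blast
  have fj: "freq xs j \<le> cj" using I Sj unfolding ssinv_def by blast
  have fk: "\<And>k. St k = None \<Longrightarrow> freq xs k \<le> cj" using I Sj unfolding ssinv_def by blast
  let ?xs = "xs @ [(i,c)]"
  have T1: "\<forall>k ck ek. ?St' k = Some (ck,ek) \<longrightarrow> ek \<le> ck \<and> ck - ek \<le> freq ?xs k \<and> freq ?xs k \<le> ck \<and> ek*m \<le> total ?xs"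
  proof (intro allI impI)
    fix k ck ek assume a: "?St' k = Some (ck, ek)"
    show "ek \<le> ck \<and> ck - ek \<le> freq ?xs k \<and> freq ?xs k \<le> ck \<and> ek*m \<le> total ?xs"
    proof (cases "k = i")
      case True then have "ck = cj + c" "ek = cj" using a by auto
      then show ?thesis using True fi cjm by (simp add: freq_snoc total_snoc)
    next
      case False then have "k \<noteq> j" "St k = Some (ck,ek)" using a by (auto split: if_splits)
      moreover have "ek \<le> ck \<and> ck - ek \<le> freq xs k \<and> freq xs k \<le> ck \<and> ek*m \<le> total xs"
        using I calculation(2) unfolding ssinv_def by blast
      ultimately show ?thesis using False by (simp add: freq_snoc total_snoc)
    qed
  qed
  have T2: "\<forall>k. ?St' k = None \<longrightarrow> (card (dom ?St') < m \<longrightarrow> freq ?xs k = 0) \<and> (\<forall>k' ck ek. ?St' k' = Some (ck,ek) \<longrightarrow> freq ?xs k \<le> ck)"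
  proof (intro allI impI conjI)
    fix k assume a: "?St' k = None"
    then have ki: "k \<noteq> i" by auto
    show "card (dom ?St') < m \<Longrightarrow> freq ?xs k = 0" using cd nlt by simp
    fix k' ck ek assume b: "?St' k' = Some (ck, ek)"
    have fkc: "freq xs k \<le> cj" using a fj fk by (cases "k = j") (auto split: if_splits)
    have "cj \<le> ck" using b mn by (cases "k' = i") (auto split: if_splits)
    then show "freq ?xs k \<le> ck" using fkc ki by (simp add: freq_snoc)
  qed
  have F1: "finite (dom ?St')" using fin dom' by simp
  have F2: "card (dom ?St') \<le> m" using cd cm by simp
  show ?thesis unfolding ssinv_def using F1 F2 T1 T2 sm by blast
qed

lemma ss_inv: "ss_run m xs St \<Longrightarrow> ssinv m xs St"
proof (induction rule: ss_run.induct)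
  case Nil
  then show ?case by (simp add: ssinv_def)
next
  case (snoc m xs St x St')
  obtain i c where x: "x = (i, c)" by (cases x)
  have st: "ss_step m St (i,c) St'" using snoc.hyps(2) x by simp
  have "ssinv m (xs @ [(i,c)]) St'"
    using st
  proof (cases rule: ss_step.cases)
    case (tracked ci ei) then show ?thesis using inv_tracked[OF snoc.IH tracked(2), of c] by (simp add: fun_upd_def)
  next
    case add then show ?thesis using inv_add[OF snoc.IH add(2) add(3), of c] by (simp add: fun_upd_def)
  next
    case (replace j cj ej) then show ?thesis using inv_replace[OF snoc.IH replace(2,3,4), of c] by blast
  qed
  then show ?case using x by simp
qed

lemma low_bound:
  assumes I: "ssinv m xs St" and full: "\<not> card (dom St) < m" and m: "m > 0"
    and b: "\<And>k. k \<in> dom St \<Longrightarrow> b \<le> cnt St k"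
  shows "real b \<le> real (total xs) / real m"
proof -
  have cm: "card (dom St) = m" using I full by (simp add: ssinv_def)
  have "b * m = (\<Sum>k\<in>dom St. b)" using cm by simp
  also have "\<dots> \<le> sum (cnt St) (dom St)" by (rule sum_mono) (rule b)
  also have "\<dots> = total xs" using I by (simp add: ssinv_def)
  finally have "real b * real m \<le> real (total xs)" by (metis of_nat_le_iff of_nat_mult)
  then show ?thesis using m by (simp add: field_simps)
qed

lemma ss_bounds:
  assumes R: "ss_run m xs St" and m: "m > 0"
  shows "real (ss_fmax m St i) \<le> real (freq xs i) + real (total xs) / real m"
    and "ss_fmin St i \<le> freq xs i"
    and "real (freq xs i) \<le> real (ss_fmin St i) + real (total xs) / real m"
proof -
  have I: "ssinv m xs St" using R by (rule ss_inv)
  have nn: "0 \<le> real (total xs) / real m" by simp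
  have "real (ss_fmax m St i) \<le> real (freq xs i) + real (total xs) / real m
    \<and> ss_fmin St i \<le> freq xs i
    \<and> real (freq xs i) \<le> real (ss_fmin St i) + real (total xs) / real m"
  proof (cases "St i")
    case None
    have fmin0: "ss_fmin St i = 0" using None by (simp add: ss_fmin_def)
    show ?thesis
    proof (cases "card (dom St) < m")
      case True
      then have "freq xs i = 0" using I None by (simp add: ssinv_def)
      then show ?thesis using True None fmin0 nn by (simp add: ss_fmax_def)
    next
      case False
      have fb: "real (freq xs i) \<le> real (total xs) / real m"
      proof (rule low_bound[OF I False m])
        fix k assume "k \<in> dom St"
        then obtain ck ek where k: "St k = Some (ck, ek)" by auto
        then have "freq xs i \<le> ck" using I None unfolding ssinv_def by blast
        then show "freq xs i \<le> cnt St k" using k by (simp add: cnt_def)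
      qed
      have Seq: "{ck. \<exists>k ek. St k = Some (ck, ek)} = cnt St ` dom St"
      proof (intro equalityI subsetI)
        fix x assume "x \<in> {ck. \<exists>k ek. St k = Some (ck, ek)}"
        then obtain k ek where "St k = Some (x, ek)" by blast
        then show "x \<in> cnt St ` dom St" by (force simp: cnt_def)
      next
        fix x assume "x \<in> cnt St ` dom St"
        then obtain k y where "St k = Some y" "x = fst y" by (auto simp: cnt_def)
        then show "x \<in> {ck. \<exists>k ek. St k = Some (ck, ek)}" by (cases y) auto
      qed
      have fin: "finite (dom St)" using I by (simp add: ssinv_def)
      have "dom St \<noteq> {}" using False m by auto
      have mb: "real (Min (cnt St ` dom St)) \<le> real (total xs) / real m"
      proof (rule low_bound[OF I False m])
        fix k assume "k \<in> dom St"
        then show "Min (cnt St ` dom St) \<le> cnt St k" using fin by (simp add: Min_le)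
      qed
      have "ss_fmax m St i = Min (cnt St ` dom St)" using None False Seq by (simp add: ss_fmax_def)
      then show ?thesis using fb mb fmin0 by simp
    qed
  next
    case (Some a)
    obtain ci ei where a: "St i = Some (ci, ei)" using Some by (cases a) auto
    have h: "ei \<le> ci \<and> ci - ei \<le> freq xs i \<and> freq xs i \<le> ci \<and> ei * m \<le> total xs"
      using I a unfolding ssinv_def by blast
    have "real ei * real m \<le> real (total xs)" using h by (metis of_nat_le_iff of_nat_mult)
    then have eb: "real ei \<le> real (total xs) / real m" using m by (simp add: field_simps)
    have "ss_fmax m St i = ci" "ss_fmin St i = ci - ei" using a by (simp_all add: ss_fmax_def ss_fmin_def)
    moreover have "ci \<le> freq xs i + ei" using h by linarith
    then have "real ci \<le> real (freq xs i) + real ei" by (metis of_nat_add of_nat_le_iff)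
    ultimately show ?thesis using h eb by (simp add: of_nat_diff)
  qed
  then show "real (ss_fmax m St i) \<le> real (freq xs i) + real (total xs) / real m"
    and "ss_fmin St i \<le> freq xs i"
    and "real (freq xs i) \<le> real (ss_fmin St i) + real (total xs) / real m" by auto
qed


lemma pre_closed:
  assumes H: "hierarchy T h" shows "r \<in> T \<Longrightarrow> prefix q r \<Longrightarrow> q \<in> T"
proof (induction r arbitrary: q rule: rev_induct)
  case Nil
  then show ?case using H by (simp add: hierarchy_def)
next
  case (snoc x xs)
  have "xs \<in> T" using H snoc.prems(1) unfolding hierarchy_def
    by (metis butlast_snoc snoc_eq_iff_butlast)
  then show ?case using snoc by auto
qed

lemma child_props: "q \<in> children T p \<Longrightarrow> strict_prefix p q \<and> q \<in> T \<and> length q = Suc (length p)"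
proof -
  assume "q \<in> children T p"
  then have q: "q \<in> T" "q \<noteq> []" "butlast q = p" by (auto simp: children_def)
  then have "q = p @ [last q]" by (metis append_butlast_last_id)
  then show ?thesis using q by (metis length_append_singleton strict_prefixI' )
qed

lemma prefix_take_iff: "prefix p e \<longleftrightarrow> take (length p) e = p"
  by (metis append_eq_conv_conj prefix_def take_is_prefix)

lemma child_of:
  assumes H: "hierarchy T h" and r: "r \<in> T" and sp: "strict_prefix p r"
  shows "take (Suc (length p)) r \<in> children T p"
proof -
  have lt: "length p < length r" using sp by (rule prefix_length_less)
  have pr: "prefix p r" using sp by (rule strict_prefixE)
  have inT: "take (Suc (length p)) r \<in> T" using pre_closed[OF H r take_is_prefix] .
  have ne: "take (Suc (length p)) r \<noteq> []" using lt by auto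
  have "butlast (take (Suc (length p)) r) = take (length p) r" using lt by (simp add: butlast_take)
  also have "\<dots> = p" using pr prefix_take_iff by blast
  finally show ?thesis using inT ne by (simp add: children_def)
qed

lemma child_unique:
  assumes "q1 \<in> children T p" "q2 \<in> children T p" "prefix q1 r" "prefix q2 r"
  shows "q1 = q2"
proof -
  have "length q1 = length q2" using assms(1,2) child_props by metis
  then show ?thesis using assms(3,4) prefix_length_prefix prefix_order.antisym by (metis order_refl)
qed

lemma hier_finite: "hierarchy T h \<Longrightarrow> finite T" by (simp add: hierarchy_def)

lemma children_finite: "hierarchy T h \<Longrightarrow> finite (children T p)"
  by (rule finite_subset[of _ T]) (auto simp: children_def hierarchy_def)

lemma sum_split:
  assumes H: "hierarchy T h" and A: "A \<subseteq> T"
  shows "(\<Sum>r\<in>{r\<in>A. strict_prefix p r}. g r) = (\<Sum>q\<in>children T p. \<Sum>r\<in>{r\<in>A. prefix q r}. g r)"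
proof -
  have eq: "{r\<in>A. strict_prefix p r} = (\<Union>q\<in>children T p. {r\<in>A. prefix q r})"
  proof (intro equalityI subsetI)
    fix r assume "r \<in> {r\<in>A. strict_prefix p r}"
    then have r: "r \<in> A" "strict_prefix p r" by auto
    then have "take (Suc (length p)) r \<in> children T p" using child_of[OF H] A by blast
    then show "r \<in> (\<Union>q\<in>children T p. {r\<in>A. prefix q r})" using r take_is_prefix by blast
  next
    fix r assume "r \<in> (\<Union>q\<in>children T p. {r\<in>A. prefix q r})"
    then obtain q where q: "q \<in> children T p" "r \<in> A" "prefix q r" by auto
    then show "r \<in> {r\<in>A. strict_prefix p r}" using child_props[OF q(1)]
      by (auto intro: prefix_order.less_le_trans)
  qed
  have finA: "finite A" using A hier_finite[OF H] finite_subset by blast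
  show ?thesis unfolding eq
  proof (rule sum.UNION_disjoint)
    show "finite (children T p)" using children_finite[OF H] .
    show "\<forall>i\<in>children T p. finite {r \<in> A. prefix i r}" using finA by auto
    show "\<forall>i\<in>children T p. \<forall>j\<in>children T p. i \<noteq> j \<longrightarrow> {r \<in> A. prefix i r} \<inter> {r \<in> A. prefix j r} = {}"
      using child_unique by blast
  qed
qed

lemma prefix_split:
  assumes "finite P"
  shows "(\<Sum>r\<in>{r\<in>P. prefix q r}. g r) = (if q \<in> P then g q else 0) + (\<Sum>r\<in>{r\<in>P. strict_prefix q r}. g r)"
proof (cases "q \<in> P")
  case True
  have "{r\<in>P. prefix q r} = insert q {r\<in>P. strict_prefix q r}" using True
    by (auto simp: prefix_order.le_less)
  then show ?thesis using True assms by simp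
next
  case False
  have "{r\<in>P. prefix q r} = {r\<in>P. strict_prefix q r}" using False
    by (auto simp: prefix_order.le_less)
  then show ?thesis using False by simp
qed

lemma main_ind:
  fixes W s fp fmin :: "'b list \<Rightarrow> real"
  assumes H: "hierarchy T h" and PT: "P \<subseteq> T"
    and srec: "\<forall>p\<in>T. s p = (\<Sum>q\<in>children T p. if q \<in> P then fmin q else s q)"
    and wrec: "\<forall>p\<in>T. W p = (\<Sum>q\<in>children T p. if q \<in> P then fp q else W q)"
    and b1: "\<forall>q\<in>T. 0 \<le> fp q - fmin q \<and> fp q - fmin q \<le> E"
  shows "p \<in> T \<Longrightarrow> 0 \<le> W p - s p \<and> (W p - s p) + (\<Sum>r\<in>{r\<in>P. strict_prefix p r}. W r - s r)
            \<le> E * real (card {r\<in>P. strict_prefix p r})"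
proof (induction p rule: measure_induct_rule[where f="\<lambda>p. h - length p"])
  case (less p)
  define X where "X r = W r - s r" for r
  let ?C = "children T p"
  have finP: "finite P" using PT hier_finite[OF H] finite_subset by blast
  have chT: "\<And>q. q \<in> ?C \<Longrightarrow> q \<in> T \<and> h - length q < h - length p"
  proof -
    fix q assume q: "q \<in> ?C"
    then have "q \<in> T" "length q = Suc (length p)" using child_props by blast+
    moreover have "length q \<le> h" using H calculation(1) by (simp add: hierarchy_def)
    ultimately show "q \<in> T \<and> h - length q < h - length p" by simp
  qed
  have IH: "\<And>q. q \<in> ?C \<Longrightarrow> 0 \<le> X q \<and> X q + (\<Sum>r\<in>{r\<in>P. strict_prefix q r}. X r)
            \<le> E * real (card {r\<in>P. strict_prefix q r})"
    using less.IH chT unfolding X_def by blast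
  have Xp: "X p = (\<Sum>q\<in>?C. if q \<in> P then fp q - fmin q else X q)"
  proof -
    have "X p = (\<Sum>q\<in>?C. if q \<in> P then fp q else W q) - (\<Sum>q\<in>?C. if q \<in> P then fmin q else s q)"
      using srec wrec less.prems unfolding X_def by simp
    also have "\<dots> = (\<Sum>q\<in>?C. (if q \<in> P then fp q else W q) - (if q \<in> P then fmin q else s q))"
      by (rule sum_subtractf[symmetric])
    also have "\<dots> = (\<Sum>q\<in>?C. if q \<in> P then fp q - fmin q else X q)"
      by (rule sum.cong) (auto simp: X_def)
    finally show ?thesis .
  qed
  have sumX: "(\<Sum>r\<in>{r\<in>P. strict_prefix p r}. X r)
      = (\<Sum>q\<in>?C. (if q\<in>P then X q else 0) + (\<Sum>r\<in>{r\<in>P. strict_prefix q r}. X r))"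
    by (subst sum_split[OF H PT]) (rule sum.cong[OF refl], rule prefix_split[OF finP])
  have cardP: "real (card {r\<in>P. strict_prefix p r})
      = (\<Sum>q\<in>?C. (if q\<in>P then 1 else 0) + real (card {r\<in>P. strict_prefix q r}))"
  proof -
    have "real (card {r\<in>P. strict_prefix p r}) = (\<Sum>r\<in>{r\<in>P. strict_prefix p r}. (1::real))" by simp
    also have "\<dots> = (\<Sum>q\<in>?C. (if q\<in>P then 1 else 0) + (\<Sum>r\<in>{r\<in>P. strict_prefix q r}. (1::real)))"
      by (subst sum_split[OF H PT]) (rule sum.cong[OF refl], rule prefix_split[OF finP])
    finally show ?thesis by simp
  qed
  have nn: "0 \<le> X p" unfolding Xp
    by (rule sum_nonneg) (use IH b1 chT in auto)
  have "X p + (\<Sum>r\<in>{r\<in>P. strict_prefix p r}. X r)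
     = (\<Sum>q\<in>?C. (if q \<in> P then fp q - fmin q else X q) + ((if q\<in>P then X q else 0) + (\<Sum>r\<in>{r\<in>P. strict_prefix q r}. X r)))"
    unfolding Xp sumX by (simp add: sum.distrib)
  also have "\<dots> \<le> (\<Sum>q\<in>?C. E * ((if q\<in>P then 1 else 0) + real (card {r\<in>P. strict_prefix q r})))"
  proof (rule sum_mono)
    fix q assume q: "q \<in> ?C"
    have i: "X q + (\<Sum>r\<in>{r\<in>P. strict_prefix q r}. X r) \<le> E * real (card {r\<in>P. strict_prefix q r})"
      using IH[OF q] by blast
    have "fp q - fmin q \<le> E" using b1 chT[OF q] by blast
    then show "(if q \<in> P then fp q - fmin q else X q) + ((if q\<in>P then X q else 0) + (\<Sum>r\<in>{r\<in>P. strict_prefix q r}. X r))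
        \<le> E * ((if q\<in>P then 1 else 0) + real (card {r\<in>P. strict_prefix q r}))"
      using i by (auto simp: algebra_simps)
  qed
  also have "\<dots> = E * real (card {r\<in>P. strict_prefix p r})"
    unfolding cardP by (simp add: sum_distrib_left)
  finally show ?case using nn unfolding X_def by simp
qed


lemma freq_cons: "freq ((e,c)#S) k = (if e = k then c else 0) + freq S k"
  by (simp add: freq_def)

lemma freq_map:
  assumes "\<forall>u\<in>set S. fst u \<in> T \<and> length (fst u) = h" "finite T"
  shows "freq (map (\<lambda>(e, c). (take (length p) e, c)) S) p = (\<Sum>e\<in>{e\<in>T. length e = h \<and> prefix p e}. freq S e)"
  using assms(1)
proof (induction S)
  case Nil
  then show ?case by simp
next
  case (Cons x S)
  obtain e0 c0 where x: "x = (e0, c0)" by (cases x)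
  let ?A = "{e\<in>T. length e = h \<and> prefix p e}"
  have e0: "e0 \<in> T" "length e0 = h" using Cons.prems x by auto
  have "(\<Sum>e\<in>?A. freq (x#S) e) = (\<Sum>e\<in>?A. (if e0 = e then c0 else 0)) + (\<Sum>e\<in>?A. freq S e)"
    unfolding x freq_cons by (simp add: sum.distrib)
  also have "(\<Sum>e\<in>?A. (if e0 = e then c0 else 0)) = (if e0 \<in> ?A then c0 else 0)"
    using assms(2) by (simp add: sum.delta)
  also have "(e0 \<in> ?A) = (take (length p) e0 = p)" using e0 prefix_take_iff by blast
  finally show ?case using Cons x by (simp add: freq_cons)
qed

lemma total_map: "total (map (\<lambda>(e, c). (take d e, c)) S) = total S"
  by (induction S) (auto simp: total_def)

lemma freq_root: "freq (map (\<lambda>(e, c). (take 0 e, c)) S) [] = total S"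
  by (induction S) (auto simp: freq_def total_def)


theorem theorem3:
  fixes T :: "'b list set" and h :: nat and S :: "('b list \<times> nat) list"
    and m :: nat and \<epsilon> \<phi> :: real
    and SS :: "nat \<Rightarrow> 'b list ss_state"
    and fmax fmin s :: "'b list \<Rightarrow> real" and P :: "'b list set"
  assumes hier: "hierarchy T h"
    and stream: "valid_stream T h S"
    and N_pos: "total S > 0"
    and m_pos: "m > 0" and eps: "\<epsilon> = 1 / real m"
    and eps_phi: "\<epsilon> < \<phi> / 2"
    and runs: "\<forall>d\<le>h. ss_run m (map (\<lambda>(e, c). (take d e, c)) S) (SS d)"
    and fmax_def: "\<forall>p. fmax p = real (ss_fmax m (SS (length p)) p)"
    and fmin_def: "\<forall>p. fmin p = real (ss_fmin (SS (length p)) p)"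
    and s_def: "\<forall>p. s p = hhh_s T fmax fmin (\<phi> * real (total S)) (h - length p) p"
    and P_def: "P = {p \<in> T. fmax p - s p \<ge> \<phi> * real (total S)}"
  shows "real (card P) \<le> 1 / (\<phi> - 2 * \<epsilon>)
    \<and> (\<forall>p\<in>P. (fmax p - s p) - real (cond_count T h S P p)
                \<le> 1 / (\<phi> - 2 * \<epsilon>) * (\<epsilon> * real (total S)))"
proof -
  define N where "N = total S"
  define E where "E = real N / real m"
  define thr where "thr = \<phi> * real N"
  define lf where "lf p = {e\<in>T. length e = h \<and> prefix p e}" for p
  define fp where "fp p = real (\<Sum>e\<in>lf p. freq S e)" for p
  define Wset where "Wset p = {e\<in>T. length e = h \<and> prefix p e \<and> (\<exists>r\<in>P. strict_prefix p r \<and> prefix r e)}" for p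
  define Cset where "Cset p = {e\<in>T. length e = h \<and> prefix p e \<and> (\<forall>q\<in>P. strict_prefix p q \<longrightarrow> \<not> prefix q e)}" for p
  define W where "W p = real (\<Sum>e\<in>Wset p. freq S e)" for p
  have finT: "finite T" using hier by (simp add: hierarchy_def)
  have PT: "P \<subseteq> T" using P_def by auto
  have finP: "finite P" using PT finT finite_subset by blast
  have rootT: "[] \<in> T" using hier by (simp add: hierarchy_def)
  have lenT: "\<And>p. p \<in> T \<Longrightarrow> length p \<le> h" using hier by (simp add: hierarchy_def)
  have valid: "\<forall>u\<in>set S. fst u \<in> T \<and> length (fst u) = h"
    using stream unfolding valid_stream_def by auto
  have Epos: "0 \<le> E" unfolding E_def by simp
  have cc: "\<And>p. real (cond_count T h S P p) = fp p - W p"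
  proof -
    fix p
    have "lf p = Wset p \<union> Cset p" "Wset p \<inter> Cset p = {}"
      unfolding lf_def Wset_def Cset_def by blast+
    moreover have "finite (Wset p)" "finite (Cset p)" unfolding Wset_def Cset_def using finT by auto
    ultimately have "(\<Sum>e\<in>lf p. freq S e) = (\<Sum>e\<in>Wset p. freq S e) + (\<Sum>e\<in>Cset p. freq S e)"
      by (simp add: sum.union_disjoint)
    moreover have "cond_count T h S P p = (\<Sum>e\<in>Cset p. freq S e)"
      unfolding cond_count_def Cset_def by simp
    ultimately show "real (cond_count T h S P p) = fp p - W p"
      unfolding fp_def W_def by simp
  qed
  have ssb: "\<And>p. p \<in> T \<Longrightarrow> fmax p \<le> fp p + E \<and> fmin p \<le> fp p \<and> fp p \<le> fmin p + E"
  proof -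
    fix p assume pT: "p \<in> T"
    have R: "ss_run m (map (\<lambda>(e, c). (take (length p) e, c)) S) (SS (length p))"
      using runs lenT[OF pT] by blast
    have fq: "freq (map (\<lambda>(e, c). (take (length p) e, c)) S) p = (\<Sum>e\<in>lf p. freq S e)"
      unfolding lf_def using freq_map[OF valid finT] .
    note b = ss_bounds[OF R m_pos, of p]
    have "ss_fmin (SS (length p)) p \<le> (\<Sum>e\<in>lf p. freq S e)" using b(2) fq by simp
    then have m2: "real (ss_fmin (SS (length p)) p) \<le> real (\<Sum>e\<in>lf p. freq S e)" by (rule of_nat_mono)
    show "fmax p \<le> fp p + E \<and> fmin p \<le> fp p \<and> fp p \<le> fmin p + E"
      using b fq m2 fmax_def fmin_def unfolding fp_def E_def N_def total_map by simp
  qed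
  have srec: "\<forall>p\<in>T. s p = (\<Sum>q\<in>children T p. if q \<in> P then fmin q else s q)"
  proof
    fix p assume pT: "p \<in> T"
    show "s p = (\<Sum>q\<in>children T p. if q \<in> P then fmin q else s q)"
    proof (cases "length p < h")
      case True
      define k where "k = h - Suc (length p)"
      have hk: "h - length p = Suc k" using True unfolding k_def by simp
      have "s p = (\<Sum>q\<in>children T p. if fmax q - hhh_s T fmax fmin (\<phi> * real (total S)) k q \<ge> \<phi> * real (total S)
                        then fmin q else hhh_s T fmax fmin (\<phi> * real (total S)) k q)"
        using s_def hk by simp
      also have "\<dots> = (\<Sum>q\<in>children T p. if q \<in> P then fmin q else s q)"
      proof (rule sum.cong[OF refl])
        fix q assume q: "q \<in> children T p"
        then have "q \<in> T" "length q = Suc (length p)" using child_props by blast+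
        then have "h - length q = k" unfolding k_def by simp
        then have "hhh_s T fmax fmin (\<phi> * real (total S)) k q = s q" using s_def by simp
        then show "(if fmax q - hhh_s T fmax fmin (\<phi> * real (total S)) k q \<ge> \<phi> * real (total S)
                        then fmin q else hhh_s T fmax fmin (\<phi> * real (total S)) k q)
             = (if q \<in> P then fmin q else s q)" using \<open>q \<in> T\<close> P_def by simp
      qed
      finally show ?thesis .
    next
      case False
      have "children T p = {}"
      proof (rule ccontr)
        assume "children T p \<noteq> {}"
        then obtain q where q: "q \<in> children T p" by blast
        then have "q \<in> T" "length q = Suc (length p)" using child_props by blast+
        then show False using lenT False by fastforce
      qed
      moreover have "h - length p = 0" using False by simp
      ultimately show ?thesis using s_def by simp
    qed
  qed
  have wrec: "\<forall>p\<in>T. W p = (\<Sum>q\<in>children T p. if q \<in> P then fp q else W q)"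
  proof
    fix p assume pT: "p \<in> T"
    define A where "A = {e\<in>T. length e = h \<and> (\<exists>r\<in>P. strict_prefix p r \<and> prefix r e)}"
    have AT: "A \<subseteq> T" unfolding A_def by auto
    have WA: "Wset p = {e\<in>A. strict_prefix p e}"
      unfolding Wset_def A_def
      by (auto intro: prefix_order.less_le_trans dest: prefix_order.less_imp_le)
    have ch: "\<And>q. q \<in> children T p \<Longrightarrow> {e\<in>A. prefix q e} = (if q \<in> P then lf q else Wset q)"
    proof -
      fix q assume q: "q \<in> children T p"
      then have cp: "strict_prefix p q" "length q = Suc (length p)" using child_props by blast+
      show "{e\<in>A. prefix q e} = (if q \<in> P then lf q else Wset q)"
      proof (cases "q \<in> P")
        case True
        then show ?thesis unfolding A_def lf_def using cp by auto
      next
        case False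
        have "\<And>e. e \<in> T \<Longrightarrow> prefix q e \<Longrightarrow>
             (\<exists>r\<in>P. strict_prefix p r \<and> prefix r e) \<longleftrightarrow> (\<exists>r\<in>P. strict_prefix q r \<and> prefix r e)"
        proof
          fix e assume e: "e \<in> T" "prefix q e"
          assume "\<exists>r\<in>P. strict_prefix p r \<and> prefix r e"
          then obtain r where r: "r \<in> P" "strict_prefix p r" "prefix r e" by blast
          have "length p < length r" using r(2) by (rule prefix_length_less)
          then have "prefix q r" using prefix_length_prefix[OF e(2) r(3)] cp(2) by simp
          moreover have "q \<noteq> r" using False r(1) by blast
          ultimately show "\<exists>r\<in>P. strict_prefix q r \<and> prefix r e" using r by (blast intro: strict_prefixI)
        next
          fix e assume e: "e \<in> T" "prefix q e"
          assume "\<exists>r\<in>P. strict_prefix q r \<and> prefix r e"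
          then show "\<exists>r\<in>P. strict_prefix p r \<and> prefix r e"
            using cp(1) by (blast intro: prefix_order.less_trans)
        qed
        then show ?thesis unfolding A_def Wset_def using False cp
          by (auto intro: prefix_order.less_le_trans dest: prefix_order.less_imp_le)
      qed
    qed
    have "(\<Sum>e\<in>Wset p. freq S e) = (\<Sum>q\<in>children T p. \<Sum>e\<in>{e\<in>A. prefix q e}. freq S e)"
      unfolding WA by (rule sum_split[OF hier AT])
    also have "\<dots> = (\<Sum>q\<in>children T p. if q \<in> P then (\<Sum>e\<in>lf q. freq S e) else (\<Sum>e\<in>Wset q. freq S e))"
      by (rule sum.cong[OF refl]) (simp add: ch)
    finally show "W p = (\<Sum>q\<in>children T p. if q \<in> P then fp q else W q)"
      unfolding W_def fp_def by (simp add: of_nat_sum if_distrib)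
  qed
  have b1: "\<forall>q\<in>T. 0 \<le> fp q - fmin q \<and> fp q - fmin q \<le> E" using ssb by force
  define X where "X r = W r - s r" for r
  have MI: "\<And>p. p \<in> T \<Longrightarrow> 0 \<le> X p \<and> X p + (\<Sum>r\<in>{r\<in>P. strict_prefix p r}. X r)
            \<le> E * real (card {r\<in>P. strict_prefix p r})"
    using main_ind[OF hier PT srec wrec b1] unfolding X_def by blast
  have sumnn: "\<And>p. 0 \<le> (\<Sum>r\<in>{r\<in>P. strict_prefix p r}. X r)"
    by (rule sum_nonneg) (use MI PT in blast)
  have diff: "\<And>p. p \<in> P \<Longrightarrow> (fmax p - s p) - real (cond_count T h S P p) \<le> E + X p"
    using cc ssb PT unfolding X_def by fastforce
  have perP: "\<And>p. p \<in> P \<Longrightarrow> (fmax p - s p) - real (cond_count T h S P p) \<le> E * real (card P)"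
  proof -
    fix p assume pP: "p \<in> P"
    have "X p \<le> E * real (card {r\<in>P. strict_prefix p r})" using MI[of p] sumnn[of p] pP PT by force
    moreover have "card {r\<in>P. strict_prefix p r} + 1 \<le> card P"
    proof -
      have "{r\<in>P. strict_prefix p r} \<subseteq> P - {p}" by auto
      then have "card {r\<in>P. strict_prefix p r} \<le> card (P - {p})" using finP by (simp add: card_mono)
      moreover have "card (P - {p}) + 1 = card P" using pP finP
        by (metis One_nat_def Suc_eq_plus1 card_Suc_Diff1)
      ultimately show ?thesis by simp
    qed
    then have "E * real (card {r\<in>P. strict_prefix p r}) + E \<le> E * real (card P)"
      using Epos by (metis (no_types, lifting) distrib_left mult.right_neutral mult_left_mono of_nat_1 of_nat_add of_nat_le_iff)
    ultimately show "(fmax p - s p) - real (cond_count T h S P p) \<le> E * real (card P)"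
      using diff[OF pP] by linarith
  qed
  have sumXP: "(\<Sum>p\<in>P. X p) \<le> E * real (card P)"
  proof -
    have Peq: "{r\<in>P. prefix [] r} = P" by auto
    have "(\<Sum>p\<in>P. X p) = (if [] \<in> P then X [] else 0) + (\<Sum>r\<in>{r\<in>P. strict_prefix [] r}. X r)"
      using prefix_split[OF finP, where q="[]" and g=X] Peq by simp
    also have "\<dots> \<le> X [] + (\<Sum>r\<in>{r\<in>P. strict_prefix [] r}. X r)" using MI[OF rootT] by simp
    also have "\<dots> \<le> E * real (card {r\<in>P. strict_prefix [] r})" using MI[OF rootT] by simp
    also have "\<dots> \<le> E * real (card P)"
      using Epos finP by (intro mult_left_mono) (simp_all add: card_mono)
    finally show ?thesis .
  qed
  have sumC: "(\<Sum>p\<in>P. real (cond_count T h S P p)) \<le> real N"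
  proof -
    have cdef: "\<And>p. cond_count T h S P p = (\<Sum>e\<in>Cset p. freq S e)"
      unfolding cond_count_def Cset_def by simp
    have finC: "\<forall>p\<in>P. finite (Cset p)" unfolding Cset_def using finT by auto
    have disj: "\<forall>p1\<in>P. \<forall>p2\<in>P. p1 \<noteq> p2 \<longrightarrow> Cset p1 \<inter> Cset p2 = {}"
    proof (intro ballI impI)
      fix p1 p2 assume p: "p1 \<in> P" "p2 \<in> P" "p1 \<noteq> p2"
      show "Cset p1 \<inter> Cset p2 = {}"
      proof (rule ccontr)
        assume "Cset p1 \<inter> Cset p2 \<noteq> {}"
        then obtain e where e: "e \<in> Cset p1" "e \<in> Cset p2" by blast
        then have "prefix p1 e" "prefix p2 e" unfolding Cset_def by auto
        then have "prefix p1 p2 \<or> prefix p2 p1" by (rule prefix_same_cases)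
        then show False
        proof
          assume "prefix p1 p2"
          then have "strict_prefix p1 p2" using p(3) by (blast intro: strict_prefixI)
          then show False using e p \<open>prefix p2 e\<close> unfolding Cset_def by blast
        next
          assume "prefix p2 p1"
          then have "strict_prefix p2 p1" using p(3) by (blast intro: strict_prefixI)
          then show False using e p \<open>prefix p1 e\<close> unfolding Cset_def by blast
        qed
      qed
    qed
    have "(\<Sum>p\<in>P. cond_count T h S P p) = (\<Sum>e\<in>(\<Union>p\<in>P. Cset p). freq S e)"
      unfolding cdef by (rule sum.UNION_disjoint[symmetric, OF finP finC disj])
    also have "\<dots> \<le> (\<Sum>e\<in>lf []. freq S e)"
      by (rule sum_mono2) (auto simp: lf_def Cset_def finT)
    also have "\<dots> = N"
      using freq_map[OF valid finT, of "[]"] freq_root[of S] unfolding lf_def N_def by simp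
    finally show ?thesis by (metis of_nat_le_iff of_nat_sum)
  qed
  have lower: "\<And>p. p \<in> P \<Longrightarrow> thr - E - X p \<le> real (cond_count T h S P p)"
  proof -
    fix p assume pP: "p \<in> P"
    have "thr \<le> fmax p - s p" using pP P_def unfolding thr_def N_def by simp
    then show "thr - E - X p \<le> real (cond_count T h S P p)" using diff[OF pP] by linarith
  qed
  have "(\<Sum>p\<in>P. thr - E - X p) \<le> (\<Sum>p\<in>P. real (cond_count T h S P p))"
    by (rule sum_mono) (rule lower)
  then have "real (card P) * (thr - E) - (\<Sum>p\<in>P. X p) \<le> real N"
    using sumC by (simp add: sum_subtractf)
  then have key: "real (card P) * (thr - 2 * E) \<le> real N" using sumXP by (simp add: algebra_simps)
  have Npos: "real N > 0" using N_pos unfolding N_def by simp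
  have Eeq: "E = \<epsilon> * real N" unfolding E_def eps by simp
  have gpos: "\<phi> - 2 * \<epsilon> > 0" using eps_phi by simp
  have "real (card P) * (\<phi> - 2 * \<epsilon>) * real N \<le> 1 * real N"
    using key unfolding thr_def Eeq by (simp add: algebra_simps)
  then have cP: "real (card P) * (\<phi> - 2 * \<epsilon>) \<le> 1" using Npos by (simp only: mult_le_cancel_right)
  then have c1: "real (card P) \<le> 1 / (\<phi> - 2 * \<epsilon>)" using gpos by (simp add: pos_le_divide_eq)
  have c2: "\<forall>p\<in>P. (fmax p - s p) - real (cond_count T h S P p) \<le> 1 / (\<phi> - 2 * \<epsilon>) * (\<epsilon> * real (total S))"
  proof
    fix p assume pP: "p \<in> P"
    have "(fmax p - s p) - real (cond_count T h S P p) \<le> E * real (card P)" by (rule perP[OF pP])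
    also have "\<dots> \<le> E * (1 / (\<phi> - 2 * \<epsilon>))" using c1 Epos by (rule mult_left_mono)
    finally show "(fmax p - s p) - real (cond_count T h S P p) \<le> 1 / (\<phi> - 2 * \<epsilon>) * (\<epsilon> * real (total S))"
      unfolding Eeq N_def by (simp add: algebra_simps)
  qed
  show ?thesis using c1 c2 by blast
qed


end
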